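(* Let $0<h\le1$, let $V$ be smooth periodic, and let $C_{n_1},\dots,C_{n_k}$ be any finite sequence of nested commutators, $C_{n_j}$ of grade $n_j$, of $A=-hD_2$ and $B=\frac1h\mathrm{diag}(V(x_0),\dots,V(x_{N-1}))$ (i.e. $C_{n_j}=[U_{n_j},[\dots,[U_2,U_1]\dots]]$ with each $U_i\in\{A,B\}$). Let $$O=\sum_{m=0}^qO_m,\qquad O_m=Y_mh^mD_m,$$ be a polynomial observable, where $Y_m=\mathrm{diag}(y_m(x_i))$ for smooth periodic $y_m$. Define $W_k=[C_{n_k},[C_{n_{k-1}},\dots,[C_{n_1},O]\dots]]$. Then $\|W_k\|_2\le C$ with a constant $C$ depending on $V$ and its derivatives but independent of $h\in(0,1]$.
   Context: Uniform periodic grid $x_i=a+(b-a)\frac iN$, $i=0,\dots,N-1$, with the number of grid points satisfying $N=O(h^{-1})$. $D_F=N\cdot M$ where $M$ is the $N\times N$ circulant with $-1$ on the diagonal, $1$ on the superdiagonal and $1$ in the bottom-left corner; $D_B=-D_F^\dagger$; $D_2=D_BD_F$; $D_0=I$, $D_k=D_2^{k/2}$ for $k$ even and $D_k=D_FD_2^{(k-1)/2}$ for $k$ odd. $\|\cdot\|_2$ is the spectral norm. *)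

theory Defs
  imports "HOL-Analysis.Analysis" "Jordan_Normal_Form.Matrix"
begin

definition smooth_fun :: "(real \<Rightarrow> real) \<Rightarrow> bool" where
  "smooth_fun f \<longleftrightarrow> (\<forall>k x. ((deriv ^^ k) f) differentiable (at x))"

definition periodic_fun :: "real \<Rightarrow> (real \<Rightarrow> real) \<Rightarrow> bool" where
  "periodic_fun p f \<longleftrightarrow> (\<forall>x. f (x + p) = f x)"

definition grid_pt :: "real \<Rightarrow> real \<Rightarrow> nat \<Rightarrow> nat \<Rightarrow> real" where
  "grid_pt a b N i = a + (b - a) * real i / real N"

(* circulant M: -1 on diagonal, 1 on superdiagonal, 1 in bottom-left corner *)
definition circM :: "nat \<Rightarrow> real mat" where
  "circM N = mat N N (\<lambda>(i,j). (if i = j then -1 else 0) + (if j = Suc i mod N then 1 else 0))"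

definition DF :: "nat \<Rightarrow> real mat" where
  "DF N = real N \<cdot>\<^sub>m circM N"

(* D_B = - D_F^dagger (real matrices: adjoint = transpose) *)
definition DB :: "nat \<Rightarrow> real mat" where
  "DB N = - transpose_mat (DF N)"

definition D2 :: "nat \<Rightarrow> real mat" where
  "D2 N = DB N * DF N"

definition Dk :: "nat \<Rightarrow> nat \<Rightarrow> real mat" where
  "Dk N k = (if even k then D2 N ^\<^sub>m (k div 2) else DF N * (D2 N ^\<^sub>m ((k - 1) div 2)))"

definition grid_diag :: "real \<Rightarrow> real \<Rightarrow> nat \<Rightarrow> (real \<Rightarrow> real) \<Rightarrow> real mat" where
  "grid_diag a b N f = mat_diag N (\<lambda>i. f (grid_pt a b N i))"

definition commutator :: "real mat \<Rightarrow> real mat \<Rightarrow> real mat" where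
  "commutator X Y = X * Y - Y * X"

definition opA :: "nat \<Rightarrow> real \<Rightarrow> real mat" where
  "opA N h = (- h) \<cdot>\<^sub>m D2 N"

definition opB :: "real \<Rightarrow> real \<Rightarrow> nat \<Rightarrow> real \<Rightarrow> (real \<Rightarrow> real) \<Rightarrow> real mat" where
  "opB a b N h V = (1 / h) \<cdot>\<^sub>m grid_diag a b N V"

(* Nested commutator [U_n,[...,[U_2,U_1]...]] of X (=A, True) and Y (=B, False);
   the word is the list [U_n, ..., U_2, U_1], its grade is its length (>= 1). *)
fun nested_comm :: "real mat \<Rightarrow> real mat \<Rightarrow> bool list \<Rightarrow> real mat" where
  "nested_comm X Y [] = X"  (* unused: words are required to be nonempty *)
| "nested_comm X Y [u] = (if u then X else Y)"
| "nested_comm X Y (u # v # us) = commutator (if u then X else Y) (nested_comm X Y (v # us))"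

definition observable :: "real \<Rightarrow> real \<Rightarrow> nat \<Rightarrow> real \<Rightarrow> nat \<Rightarrow> (nat \<Rightarrow> real \<Rightarrow> real) \<Rightarrow> real mat" where
  "observable a b N h q y =
     foldr (\<lambda>m S. S + (h ^ m) \<cdot>\<^sub>m (grid_diag a b N (y m) * Dk N m)) [0..<Suc q] (0\<^sub>m N N)"

(* W_k = [C_k,[C_{k-1},...,[C_1,O]...]] for the list [C_1,...,C_k] *)
definition iter_comm :: "real mat list \<Rightarrow> real mat \<Rightarrow> real mat" where
  "iter_comm Cs Obs = foldl (\<lambda>W C. commutator C W) Obs Cs"

definition vec_norm2 :: "real vec \<Rightarrow> real" where
  "vec_norm2 v = sqrt (\<Sum>i<dim_vec v. (v $ i)\<^sup>2)"

definition spec_norm :: "real mat \<Rightarrow> real" where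
  "spec_norm X = Sup {vec_norm2 (X *\<^sub>v v) | v. v \<in> carrier_vec (dim_col X) \<and> vec_norm2 v \<le> 1}"

end

theory Submission
  imports Defs "Jordan_Normal_Form.Determinant"
begin


lemma comm_add_left:
  assumes "A \<in> carrier_mat n n" "B \<in> carrier_mat n n" "C \<in> carrier_mat n n"
  shows "commutator (A + B) C = commutator A C + commutator B C"
  unfolding commutator_def using assms
  by (simp add: add_mult_distrib_mat mult_add_distrib_mat) (rule eq_matI, auto)

lemma comm_add_right:
  assumes "A \<in> carrier_mat n n" "B \<in> carrier_mat n n" "C \<in> carrier_mat n n"
  shows "commutator A (B + C) = commutator A B + commutator A C"
  unfolding commutator_def using assms
  by (simp add: add_mult_distrib_mat mult_add_distrib_mat) (rule eq_matI, auto)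

lemma comm_mul_left:
  assumes A: "A \<in> carrier_mat n n" and B: "B \<in> carrier_mat n n" and C: "C \<in> carrier_mat n n"
  shows "commutator (A * B) C = A * commutator B C + commutator A C * B"
proof -
  have c: "B * C \<in> carrier_mat n n" "C * B \<in> carrier_mat n n" "A * C \<in> carrier_mat n n" "C * A \<in> carrier_mat n n"
    "A * B \<in> carrier_mat n n"
    using A B C by auto
  have "A * commutator B C + commutator A C * B = (A * (B * C) - A * (C * B)) + (A * C * B - C * A * B)"
    unfolding commutator_def
    by (simp only: mult_minus_distrib_mat[OF A c(1) c(2)] minus_mult_distrib_mat[OF c(3) c(4) B])
  also have "\<dots> = A * B * C - C * (A * B)"
    using A B C by (intro eq_matI) auto
  finally show ?thesis unfolding commutator_def by simp
qed

lemma comm_mul_right: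
  assumes A: "A \<in> carrier_mat n n" and B: "B \<in> carrier_mat n n" and C: "C \<in> carrier_mat n n"
  shows "commutator A (B * C) = B * commutator A C + commutator A B * C"
proof -
  have c: "A * C \<in> carrier_mat n n" "C * A \<in> carrier_mat n n" "A * B \<in> carrier_mat n n" "B * A \<in> carrier_mat n n"
    using A B C by auto
  have "B * commutator A C + commutator A B * C = (B * (A * C) - B * (C * A)) + (A * B * C - B * A * C)"
    unfolding commutator_def
    by (simp only: mult_minus_distrib_mat[OF B c(1) c(2)] minus_mult_distrib_mat[OF c(3) c(4) C])
  also have "\<dots> = A * (B * C) - B * C * A"
    using A B C by (intro eq_matI) auto
  finally show ?thesis unfolding commutator_def by simp
qed

lemma comm_smult_left:
  assumes "A \<in> carrier_mat n n" "C \<in> carrier_mat n n"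
  shows "commutator (c \<cdot>\<^sub>m A) C = c \<cdot>\<^sub>m commutator A C"
  unfolding commutator_def using assms
  by (simp add: mult_smult_distrib mult_smult_assoc_mat) (rule eq_matI, auto simp: algebra_simps)

lemma comm_smult_right:
  assumes "A \<in> carrier_mat n n" "C \<in> carrier_mat n n"
  shows "commutator A (c \<cdot>\<^sub>m C) = c \<cdot>\<^sub>m commutator A C"
  unfolding commutator_def using assms
  by (simp add: mult_smult_distrib mult_smult_assoc_mat) (rule eq_matI, auto simp: algebra_simps)

lemma comm_swap:
  assumes "A \<in> carrier_mat n n" "C \<in> carrier_mat n n"
  shows "commutator A C = (-1) \<cdot>\<^sub>m commutator C A"
  unfolding commutator_def using assms
  by (intro eq_matI) auto

lemma comm_self: assumes "A \<in> carrier_mat n n" shows "commutator A A = 0\<^sub>m n n"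
  unfolding commutator_def using assms by simp

lemma comm_carrier: assumes "A \<in> carrier_mat n n" "C \<in> carrier_mat n n"
  shows "commutator A C \<in> carrier_mat n n"
  unfolding commutator_def using assms by auto

lemma smult_smult_m: "a \<cdot>\<^sub>m (b \<cdot>\<^sub>m (A::real mat)) = (a * b) \<cdot>\<^sub>m A"
  by (rule eq_matI) auto

lemma periodic_mod: fixes d :: "nat \<Rightarrow> real" assumes "\<And>i. d (i + n) = d i" shows "d (i mod n) = d i"
proof -
  have "d (j + m * n) = d j" for j m
  proof (induction m)
    case (Suc m)
    have "j + Suc m * n = (j + m * n) + n" by simp
    then show ?case using Suc assms by metis
  qed simp
  then show ?thesis by (metis mod_div_mult_eq)
qed

definition Sm :: "nat \<Rightarrow> real mat" where
  "Sm n = mat n n (\<lambda>(i,j). if j = Suc i mod n then 1 else 0)"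
definition Tm :: "nat \<Rightarrow> real mat" where
  "Tm n = mat n n (\<lambda>(i,j). if i = Suc j mod n then 1 else 0)"

lemma Sm_carrier[simp]: "Sm n \<in> carrier_mat n n" unfolding Sm_def by auto
lemma Tm_carrier[simp]: "Tm n \<in> carrier_mat n n" unfolding Tm_def by auto

lemma Sm_dims[simp]: "dim_row (Sm n) = n" "dim_col (Sm n) = n" "dim_row (Tm n) = n" "dim_col (Tm n) = n"
  by (auto simp: Sm_def Tm_def)

lemma mat_diag_dims[simp]: "dim_row (mat_diag n d) = n" "dim_col (mat_diag n d) = n"
  by (auto simp: mat_diag_def)

lemma Suc_mod_inj: "i < n \<Longrightarrow> j < n \<Longrightarrow> Suc i mod n = Suc j mod n \<Longrightarrow> i = j"
  by (auto simp: mod_Suc split: if_splits)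

lemma Sm_Tm: "Sm n * Tm n = 1\<^sub>m n"
proof (rule eq_matI)
  fix i j assume ij: "i < dim_row (1\<^sub>m n)" "j < dim_col (1\<^sub>m n)"
  have "(Sm n * Tm n) $$ (i, j) = (\<Sum>k = 0..<n. (if k = Suc i mod n then 1 else 0) * (if k = Suc j mod n then 1 else 0))"
    using ij by (simp add: Sm_def Tm_def scalar_prod_def)
  also have "\<dots> = (\<Sum>k = 0..<n. if k = Suc i mod n then (if Suc i mod n = Suc j mod n then 1 else 0) else 0)"
    by (rule sum.cong) auto
  also have "\<dots> = (if Suc i mod n = Suc j mod n then 1 else 0)"
    using ij by (simp add: sum.delta)
  also have "\<dots> = 1\<^sub>m n $$ (i, j)" using ij Suc_mod_inj[of i n j]
    by auto
  finally show "(Sm n * Tm n) $$ (i, j) = 1\<^sub>m n $$ (i, j)" .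
qed (auto simp: Sm_def Tm_def)

lemma Tm_Sm: "Tm n * Sm n = 1\<^sub>m n"
  by (rule mat_mult_left_right_inverse[OF Sm_carrier Tm_carrier Sm_Tm])

lemma vec_norm2_L2: "vec_norm2 v = L2_set (\<lambda>i. v $ i) {..<dim_vec v}"
  unfolding vec_norm2_def L2_set_def by simp

lemma vec_norm2_nonneg: "0 \<le> vec_norm2 v"
  unfolding vec_norm2_def by (simp add: sum_nonneg)

lemma vec_norm2_add: assumes "v \<in> carrier_vec n" "w \<in> carrier_vec n"
  shows "vec_norm2 (v + w) \<le> vec_norm2 v + vec_norm2 w"
proof -
  have "vec_norm2 (v + w) = L2_set (\<lambda>i. v $ i + w $ i) {..<n}"
    unfolding vec_norm2_L2 using assms by (intro L2_set_cong) auto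
  also have "\<dots> \<le> L2_set (\<lambda>i. v $ i) {..<n} + L2_set (\<lambda>i. w $ i) {..<n}"
    by (rule L2_set_triangle_ineq)
  finally show ?thesis unfolding vec_norm2_L2 using assms by simp
qed

lemma vec_norm2_smult: "vec_norm2 (c \<cdot>\<^sub>v v) = \<bar>c\<bar> * vec_norm2 v"
proof -
  have "vec_norm2 (c \<cdot>\<^sub>v v) = sqrt (c\<^sup>2 * (\<Sum>i<dim_vec v. (v $ i)\<^sup>2))"
    unfolding vec_norm2_def by (simp add: sum_distrib_left power_mult_distrib)
  then show ?thesis unfolding vec_norm2_def by (simp add: real_sqrt_mult)
qed

lemma vec_norm2_mono: assumes "dim_vec w = dim_vec v" "\<And>i. i < dim_vec v \<Longrightarrow> \<bar>w $ i\<bar> \<le> M * \<bar>v $ i\<bar>" "0 \<le> M"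
  shows "vec_norm2 w \<le> M * vec_norm2 v"
proof -
  have "(\<Sum>i<dim_vec w. (w $ i)\<^sup>2) \<le> (\<Sum>i<dim_vec v. M\<^sup>2 * (v $ i)\<^sup>2)"
    using assms(1) proof (simp, intro sum_mono)
    fix i assume "i \<in> {..<dim_vec v}"
    then have "\<bar>w $ i\<bar> \<le> \<bar>M * v $ i\<bar>" using assms by (simp add: abs_mult)
    then have "(w $ i)\<^sup>2 \<le> (M * v $ i)\<^sup>2" by (simp add: abs_le_square_iff)
    then show "(w $ i)\<^sup>2 \<le> M\<^sup>2 * (v $ i)\<^sup>2" by (simp add: power_mult_distrib)
  qed
  then have "vec_norm2 w \<le> sqrt (M\<^sup>2 * (\<Sum>i<dim_vec v. (v $ i)\<^sup>2))"
    unfolding vec_norm2_def by (simp add: sum_distrib_left)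
  then show ?thesis unfolding vec_norm2_def using assms(3) by (simp add: real_sqrt_mult)
qed

lemma diag_mult_vec: assumes "v \<in> carrier_vec n" "i < n"
  shows "(mat_diag n d *\<^sub>v v) $ i = d i * v $ i"
proof -
  have "(mat_diag n d *\<^sub>v v) $ i = (\<Sum>k = 0..<n. (if i = k then d k else 0) * v $ k)"
    using assms by (simp add: mat_diag_def scalar_prod_def)
  also have "\<dots> = (\<Sum>k = 0..<n. if k = i then d i * v $ i else 0)"
    by (rule sum.cong) auto
  finally show ?thesis using assms by simp
qed

lemma diag_norm: assumes "v \<in> carrier_vec n" "\<And>i. i < n \<Longrightarrow> \<bar>d i\<bar> \<le> M" "0 \<le> M"
  shows "vec_norm2 (mat_diag n d *\<^sub>v v) \<le> M * vec_norm2 v"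
proof (rule vec_norm2_mono)
  show "dim_vec (mat_diag n d *\<^sub>v v) = dim_vec v" using assms(1) by simp
  fix i assume "i < dim_vec v"
  then have i: "i < n" using assms(1) by simp
  have "\<bar>(mat_diag n d *\<^sub>v v) $ i\<bar> = \<bar>d i\<bar> * \<bar>v $ i\<bar>"
    by (simp only: diag_mult_vec[OF assms(1) i] abs_mult)
  also have "\<dots> \<le> M * \<bar>v $ i\<bar>" by (rule mult_right_mono[OF assms(2)[OF i]]) simp
  finally show "\<bar>(mat_diag n d *\<^sub>v v) $ i\<bar> \<le> M * \<bar>v $ i\<bar>" .
qed (rule assms(3))

lemma Sm_mult_vec: assumes "v \<in> carrier_vec n" "i < n"
  shows "(Sm n *\<^sub>v v) $ i = v $ (Suc i mod n)"
proof -
  have "(Sm n *\<^sub>v v) $ i = (\<Sum>k = 0..<n. (if k = Suc i mod n then 1 else 0) * v $ k)"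
    using assms by (simp add: Sm_def scalar_prod_def)
  also have "\<dots> = (\<Sum>k = 0..<n. if k = Suc i mod n then v $ (Suc i mod n) else 0)"
    by (rule sum.cong) auto
  finally show ?thesis using assms by simp
qed

lemma Sm_norm: assumes "v \<in> carrier_vec n"
  shows "vec_norm2 (Sm n *\<^sub>v v) = vec_norm2 v"
proof -
  let ?p = "\<lambda>i. Suc i mod n"
  have inj: "inj_on ?p {..<n}" using Suc_mod_inj by (auto simp: inj_on_def)
  have sub: "?p ` {..<n} \<subseteq> {..<n}" by auto
  have img: "?p ` {..<n} = {..<n}" by (rule endo_inj_surj[OF _ sub inj]) simp
  have bij: "bij_betw ?p {..<n} {..<n}" using inj img by (simp add: bij_betw_def)
  have "(\<Sum>i<n. ((Sm n *\<^sub>v v) $ i)\<^sup>2) = (\<Sum>i<n. (v $ (?p i))\<^sup>2)"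
    using assms by (intro sum.cong) (auto simp del: index_mult_mat_vec simp: Sm_mult_vec)
  also have "\<dots> = (\<Sum>i<n. (v $ i)\<^sup>2)"
    by (rule sum.reindex_bij_betw[OF bij, of "\<lambda>i. (v $ i)\<^sup>2"])
  finally show ?thesis unfolding vec_norm2_def using assms by (simp del: index_mult_mat_vec)
qed

lemma Tm_norm: assumes "v \<in> carrier_vec n"
  shows "vec_norm2 (Tm n *\<^sub>v v) = vec_norm2 v"
proof -
  have "vec_norm2 (Tm n *\<^sub>v v) = vec_norm2 (Sm n *\<^sub>v (Tm n *\<^sub>v v))"
  proof (rule Sm_norm[symmetric])
    show "Tm n *\<^sub>v v \<in> carrier_vec n" by (rule mult_mat_vec_carrier[OF Tm_carrier assms])
  qed
  also have "Sm n *\<^sub>v (Tm n *\<^sub>v v) = (Sm n * Tm n) *\<^sub>v v"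
    using assms by (simp add: assoc_mult_mat_vec[symmetric, of _ n n _ n])
  finally show ?thesis using assms by (simp add: Sm_Tm)
qed



lemma smult_mat_vec: "dim_vec v = dim_col A \<Longrightarrow> (c \<cdot>\<^sub>m A) *\<^sub>v v = c \<cdot>\<^sub>v (A *\<^sub>v (v :: real vec))"
  by (rule eq_vecI) (auto simp: scalar_prod_def sum_distrib_left mult.assoc)

definition dS :: "(nat \<Rightarrow> real) \<Rightarrow> nat \<Rightarrow> real" where
  "dS u = (\<lambda>i. u (Suc i) - u i)"

lemma comm_S_diag:
  assumes per: "\<And>i. d (i + n) = d i" and h: "h \<noteq> 0"
  shows "commutator (Sm n) (mat_diag n d) = h \<cdot>\<^sub>m (mat_diag n (\<lambda>i. (1/h) * (d (Suc i) - d i)) * Sm n)"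
  unfolding commutator_def
  using h by (simp add: mat_diag_mult_left[OF Sm_carrier] mat_diag_mult_right[OF Sm_carrier])
     (rule eq_matI, auto simp: Sm_def periodic_mod[of d n, OF per])

lemma comm_T_diag:
  assumes per: "\<And>i. d (i + n) = d i" and h: "h \<noteq> 0"
  shows "commutator (Tm n) (mat_diag n d) = h \<cdot>\<^sub>m ((-1) \<cdot>\<^sub>m (Tm n * mat_diag n (\<lambda>i. (1/h) * (d (Suc i) - d i))))"
  unfolding commutator_def
  using h by (simp add: mat_diag_mult_left[OF Tm_carrier] mat_diag_mult_right[OF Tm_carrier])
     (rule eq_matI, auto simp: Tm_def periodic_mod[of d n, OF per])

definition bnd :: "(real \<Rightarrow> real) \<Rightarrow> bool" where
  "bnd c \<longleftrightarrow> (\<exists>M. \<forall>h. 0 < h \<and> h \<le> 1 \<longrightarrow> \<bar>c h\<bar> \<le> M)"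

locale grid =
  fixes Ng :: "real \<Rightarrow> nat"
begin

definition Gs :: "(real \<Rightarrow> nat \<Rightarrow> real) set" where
  "Gs = {g. (\<forall>h. 0 < h \<and> h \<le> 1 \<longrightarrow> (\<forall>i. g h (i + Ng h) = g h i)) \<and>
            (\<forall>k. \<exists>M. \<forall>h. 0 < h \<and> h \<le> 1 \<longrightarrow> (\<forall>i. \<bar>(dS ^^ k) (g h) i\<bar> \<le> M * h ^ k))}"

inductive_set alg :: "(real \<Rightarrow> real mat) set" where
  diag: "g \<in> Gs \<Longrightarrow> (\<lambda>h. mat_diag (Ng h) (g h)) \<in> alg"
| shS: "(\<lambda>h. Sm (Ng h)) \<in> alg"
| shT: "(\<lambda>h. Tm (Ng h)) \<in> alg"
| smul: "bnd c \<Longrightarrow> F \<in> alg \<Longrightarrow> (\<lambda>h. c h \<cdot>\<^sub>m F h) \<in> alg"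
| add: "F \<in> alg \<Longrightarrow> K \<in> alg \<Longrightarrow> (\<lambda>h. F h + K h) \<in> alg"
| mul: "F \<in> alg \<Longrightarrow> K \<in> alg \<Longrightarrow> (\<lambda>h. F h * K h) \<in> alg"

lemma alg_carrier: "F \<in> alg \<Longrightarrow> F h \<in> carrier_mat (Ng h) (Ng h)"
  by (induction rule: alg.induct) auto

lemma alg_bound: "F \<in> alg \<Longrightarrow> \<exists>M\<ge>0. \<forall>h. 0 < h \<and> h \<le> 1 \<longrightarrow>
   (\<forall>v\<in>carrier_vec (Ng h). vec_norm2 (F h *\<^sub>v v) \<le> M * vec_norm2 v)"
proof (induction rule: alg.induct)
  case (diag g)
  from diag obtain M where M: "\<forall>h. 0 < h \<and> h \<le> 1 \<longrightarrow> (\<forall>i. \<bar>(dS ^^ 0) (g h) i\<bar> \<le> M * h ^ 0)"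
    unfolding Gs_def by blast
  have M': "\<forall>h. 0 < h \<and> h \<le> 1 \<longrightarrow> (\<forall>i. \<bar>g h i\<bar> \<le> max M 0)"
  proof (intro allI impI)
    fix h :: real and i assume "0 < h \<and> h \<le> 1"
    then have "\<bar>(dS ^^ 0) (g h) i\<bar> \<le> M * h ^ 0" using M by blast
    then show "\<bar>g h i\<bar> \<le> max M 0" by simp
  qed
  show ?case
  proof (intro exI[of _ "max M 0"] conjI allI impI ballI)
    fix h :: real and v :: "real vec" assume "0 < h \<and> h \<le> 1" "v \<in> carrier_vec (Ng h)"
    then show "vec_norm2 (mat_diag (Ng h) (g h) *\<^sub>v v) \<le> max M 0 * vec_norm2 v"
      using M' by (intro diag_norm) auto
  qed simp
next
  case shS
  show ?case by (intro exI[of _ 1]) (simp add: Sm_norm)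
next
  case shT
  show ?case by (intro exI[of _ 1]) (simp add: Tm_norm)
next
  case (smul c F)
  from smul(1) obtain Mc where Mc: "\<forall>h. 0 < h \<and> h \<le> 1 \<longrightarrow> \<bar>c h\<bar> \<le> Mc" unfolding bnd_def by blast
  from smul(3) obtain M where M: "M \<ge> 0" "\<forall>h. 0 < h \<and> h \<le> 1 \<longrightarrow>
   (\<forall>v\<in>carrier_vec (Ng h). vec_norm2 (F h *\<^sub>v v) \<le> M * vec_norm2 v)" by blast
  show ?case
  proof (intro exI[of _ "max Mc 0 * M"] conjI allI impI ballI)
    fix h :: real and v :: "real vec" assume h: "0 < h \<and> h \<le> 1" and v: "v \<in> carrier_vec (Ng h)"
    have "F h \<in> carrier_mat (Ng h) (Ng h)" using smul alg_carrier by auto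
    then have "vec_norm2 ((c h \<cdot>\<^sub>m F h) *\<^sub>v v) = \<bar>c h\<bar> * vec_norm2 (F h *\<^sub>v v)"
      using v by (simp add: smult_mat_vec vec_norm2_smult)
    also have "\<dots> \<le> max Mc 0 * (M * vec_norm2 v)"
      using Mc M h v by (intro mult_mono) (auto simp: vec_norm2_nonneg)
    finally show "vec_norm2 ((c h \<cdot>\<^sub>m F h) *\<^sub>v v) \<le> max Mc 0 * M * vec_norm2 v" by simp
  qed (use M in simp)
next
  case (add F K)
  from add(3) obtain M where M: "M \<ge> 0" "\<forall>h. 0 < h \<and> h \<le> 1 \<longrightarrow>
   (\<forall>v\<in>carrier_vec (Ng h). vec_norm2 (F h *\<^sub>v v) \<le> M * vec_norm2 v)" by blast
  from add(4) obtain M2 where M2: "M2 \<ge> 0" "\<forall>h. 0 < h \<and> h \<le> 1 \<longrightarrow>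
   (\<forall>v\<in>carrier_vec (Ng h). vec_norm2 (K h *\<^sub>v v) \<le> M2 * vec_norm2 v)" by blast
  show ?case
  proof (intro exI[of _ "M + M2"] conjI allI impI ballI)
    fix h :: real and v :: "real vec" assume h: "0 < h \<and> h \<le> 1" and v: "v \<in> carrier_vec (Ng h)"
    have cF: "F h \<in> carrier_mat (Ng h) (Ng h)" "K h \<in> carrier_mat (Ng h) (Ng h)"
      using add alg_carrier by auto
    have "(F h + K h) *\<^sub>v v = F h *\<^sub>v v + K h *\<^sub>v v"
      by (rule add_mult_distrib_mat_vec[OF cF v])
    then have "vec_norm2 ((F h + K h) *\<^sub>v v) \<le> vec_norm2 (F h *\<^sub>v v) + vec_norm2 (K h *\<^sub>v v)"
      using cF v by (simp add: vec_norm2_add[of _ "Ng h"])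
    also have "\<dots> \<le> M * vec_norm2 v + M2 * vec_norm2 v" using M M2 h v by (intro add_mono) auto
    finally show "vec_norm2 ((F h + K h) *\<^sub>v v) \<le> (M + M2) * vec_norm2 v" by (simp add: algebra_simps)
  qed (use M M2 in simp)
next
  case (mul F K)
  from mul(3) obtain M where M: "M \<ge> 0" "\<forall>h. 0 < h \<and> h \<le> 1 \<longrightarrow>
   (\<forall>v\<in>carrier_vec (Ng h). vec_norm2 (F h *\<^sub>v v) \<le> M * vec_norm2 v)" by blast
  from mul(4) obtain M2 where M2: "M2 \<ge> 0" "\<forall>h. 0 < h \<and> h \<le> 1 \<longrightarrow>
   (\<forall>v\<in>carrier_vec (Ng h). vec_norm2 (K h *\<^sub>v v) \<le> M2 * vec_norm2 v)" by blast
  show ?case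
  proof (intro exI[of _ "M * M2"] conjI allI impI ballI)
    fix h :: real and v :: "real vec" assume h: "0 < h \<and> h \<le> 1" and v: "v \<in> carrier_vec (Ng h)"
    have cF: "F h \<in> carrier_mat (Ng h) (Ng h)" "K h \<in> carrier_mat (Ng h) (Ng h)"
      using mul alg_carrier by auto
    have Kv: "K h *\<^sub>v v \<in> carrier_vec (Ng h)" using cF(2) v by (rule mult_mat_vec_carrier)
    have "(F h * K h) *\<^sub>v v = F h *\<^sub>v (K h *\<^sub>v v)"
      by (rule assoc_mult_mat_vec[OF cF v])
    then have "vec_norm2 ((F h * K h) *\<^sub>v v) \<le> M * vec_norm2 (K h *\<^sub>v v)"
      using M h Kv by simp
    also have "\<dots> \<le> M * (M2 * vec_norm2 v)" using M M2 h v by (intro mult_left_mono) auto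
    finally show "vec_norm2 ((F h * K h) *\<^sub>v v) \<le> (M * M2) * vec_norm2 v" by (simp add: algebra_simps)
  qed (use M M2 in simp)
qed

end


lemma dS_scale: "(dS ^^ k) (\<lambda>i. c * w i) = (\<lambda>i. c * (dS ^^ k) w i)"
  by (induction k) (auto simp: dS_def algebra_simps)

context grid begin

definition hA :: "(real \<Rightarrow> real mat) \<Rightarrow> bool" where
  "hA P \<longleftrightarrow> (\<exists>R\<in>alg. \<forall>h. 0 < h \<and> h \<le> 1 \<longrightarrow> P h = h \<cdot>\<^sub>m R h)"

definition isgen :: "(real \<Rightarrow> real mat) \<Rightarrow> bool" where
  "isgen F \<longleftrightarrow> (\<exists>g\<in>Gs. F = (\<lambda>h. mat_diag (Ng h) (g h))) \<or> F = (\<lambda>h. Sm (Ng h)) \<or> F = (\<lambda>h. Tm (Ng h))"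

lemma isgen_alg: "isgen F \<Longrightarrow> F \<in> alg"
  unfolding isgen_def by (auto intro: alg.intros)

lemma Gs_dS: assumes "g \<in> Gs" shows "(\<lambda>h i. (1/h) * (g h (Suc i) - g h i)) \<in> Gs"
proof -
  have per: "\<forall>h. 0 < h \<and> h \<le> 1 \<longrightarrow> (\<forall>i. g h (i + Ng h) = g h i)"
    and bd: "\<forall>k. \<exists>M. \<forall>h. 0 < h \<and> h \<le> 1 \<longrightarrow> (\<forall>i. \<bar>(dS ^^ k) (g h) i\<bar> \<le> M * h ^ k)"
    using assms unfolding Gs_def by auto
  have "\<exists>M. \<forall>h. 0 < h \<and> h \<le> 1 \<longrightarrow> (\<forall>i. \<bar>(dS ^^ k) (\<lambda>i. (1/h) * (g h (Suc i) - g h i)) i\<bar> \<le> M * h ^ k)" for k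
  proof -
    obtain M where M: "\<forall>h. 0 < h \<and> h \<le> 1 \<longrightarrow> (\<forall>i. \<bar>(dS ^^ Suc k) (g h) i\<bar> \<le> M * h ^ Suc k)"
      using bd by blast
    show ?thesis
    proof (intro exI[of _ M] allI impI)
      fix h :: real and i assume h: "0 < h \<and> h \<le> 1"
      have e1: "(dS ^^ k) (\<lambda>i. (1/h) * (g h (Suc i) - g h i)) = (dS ^^ k) (\<lambda>i. (1/h) * dS (g h) i)"
        by (simp add: dS_def)
      have e2: "(dS ^^ k) (\<lambda>i. (1/h) * dS (g h) i) = (\<lambda>i. (1/h) * (dS ^^ k) (dS (g h)) i)"
        by (rule dS_scale)
      have e3: "(dS ^^ k) (dS (g h)) = (dS ^^ Suc k) (g h)"
        by (simp only: funpow_Suc_right o_apply)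
      have "(dS ^^ k) (\<lambda>i. (1/h) * (g h (Suc i) - g h i)) i = (1/h) * (dS ^^ Suc k) (g h) i"
        by (simp only: e1 e2 e3)
      then have "\<bar>(dS ^^ k) (\<lambda>i. (1/h) * (g h (Suc i) - g h i)) i\<bar> = (1/h) * \<bar>(dS ^^ Suc k) (g h) i\<bar>"
        using h by (simp add: abs_mult)
      also have "\<dots> \<le> (1/h) * (M * h ^ Suc k)" using M h by (intro mult_left_mono) auto
      also have "\<dots> = M * h ^ k" using h by simp
      finally show "\<bar>(dS ^^ k) (\<lambda>i. (1/h) * (g h (Suc i) - g h i)) i\<bar> \<le> M * h ^ k" .
    qed
  qed
  moreover have "\<forall>h. 0 < h \<and> h \<le> 1 \<longrightarrow> (\<forall>i. (1/h) * (g h (Suc (i + Ng h)) - g h (i + Ng h)) = (1/h) * (g h (Suc i) - g h i))"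
    using per by (metis add_Suc)
  ultimately show ?thesis unfolding Gs_def by auto
qed

lemma hA_cong: "(\<And>h. 0 < h \<and> h \<le> 1 \<Longrightarrow> P h = Q h) \<Longrightarrow> hA Q \<Longrightarrow> hA P"
  unfolding hA_def by auto

lemma hA_zero: "hA (\<lambda>h. 0\<^sub>m (Ng h) (Ng h))"
  unfolding hA_def
proof (intro bexI[of _ "\<lambda>h. 0 \<cdot>\<^sub>m Sm (Ng h)"] allI impI)
  show "(\<lambda>h. 0 \<cdot>\<^sub>m Sm (Ng h)) \<in> alg" by (intro alg.intros) (auto simp: bnd_def)
qed (rule eq_matI, auto)

lemma hA_smul: assumes "bnd c" "hA P" shows "hA (\<lambda>h. c h \<cdot>\<^sub>m P h)"
proof -
  obtain R where R: "R \<in> alg" "\<forall>h. 0 < h \<and> h \<le> 1 \<longrightarrow> P h = h \<cdot>\<^sub>m R h"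
    using assms(2) unfolding hA_def by blast
  show ?thesis unfolding hA_def
    by (intro bexI[of _ "\<lambda>h. c h \<cdot>\<^sub>m R h"] allI impI) (auto simp: R smult_smult_m mult.commute intro: alg.intros assms(1))
qed

lemma hA_add: assumes "hA P" "hA Q" shows "hA (\<lambda>h. P h + Q h)"
proof -
  obtain R where R: "R \<in> alg" "\<forall>h. 0 < h \<and> h \<le> 1 \<longrightarrow> P h = h \<cdot>\<^sub>m R h"
    using assms(1) unfolding hA_def by blast
  obtain R2 where R2: "R2 \<in> alg" "\<forall>h. 0 < h \<and> h \<le> 1 \<longrightarrow> Q h = h \<cdot>\<^sub>m R2 h"
    using assms(2) unfolding hA_def by blast
  show ?thesis unfolding hA_def
  proof (intro bexI[of _ "\<lambda>h. R h + R2 h"] allI impI)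
    fix h :: real assume "0 < h \<and> h \<le> 1"
    then have "P h = h \<cdot>\<^sub>m R h" "Q h = h \<cdot>\<^sub>m R2 h" using R R2 by auto
    then show "P h + Q h = h \<cdot>\<^sub>m (R h + R2 h)"
      by (simp only: add_smult_distrib_left_mat[OF alg_carrier[OF R(1)] alg_carrier[OF R2(1)]])
  qed (use R R2 in \<open>auto intro: alg.intros\<close>)
qed

lemma hA_mulL: assumes "F \<in> alg" "hA P" shows "hA (\<lambda>h. F h * P h)"
proof -
  obtain R where R: "R \<in> alg" "\<forall>h. 0 < h \<and> h \<le> 1 \<longrightarrow> P h = h \<cdot>\<^sub>m R h"
    using assms(2) unfolding hA_def by blast
  show ?thesis unfolding hA_def
  proof (intro bexI[of _ "\<lambda>h. F h * R h"] allI impI)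
    fix h :: real assume "0 < h \<and> h \<le> 1"
    then have "P h = h \<cdot>\<^sub>m R h" using R by auto
    then show "F h * P h = h \<cdot>\<^sub>m (F h * R h)"
      by (simp only: mult_smult_distrib[OF alg_carrier[OF assms(1)] alg_carrier[OF R(1)]])
  qed (use R assms in \<open>auto intro: alg.intros\<close>)
qed

lemma hA_mulR: assumes "F \<in> alg" "hA P" shows "hA (\<lambda>h. P h * F h)"
proof -
  obtain R where R: "R \<in> alg" "\<forall>h. 0 < h \<and> h \<le> 1 \<longrightarrow> P h = h \<cdot>\<^sub>m R h"
    using assms(2) unfolding hA_def by blast
  show ?thesis unfolding hA_def
  proof (intro bexI[of _ "\<lambda>h. R h * F h"] allI impI)
    fix h :: real assume "0 < h \<and> h \<le> 1"
    then have "P h = h \<cdot>\<^sub>m R h" using R by auto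
    then show "P h * F h = h \<cdot>\<^sub>m (R h * F h)"
      by (simp only: mult_smult_assoc_mat[OF alg_carrier[OF R(1)] alg_carrier[OF assms(1)]])
  qed (use R assms in \<open>auto intro: alg.intros\<close>)
qed

lemma hA_swap: assumes "F \<in> alg" "K \<in> alg" "hA (\<lambda>h. commutator (F h) (K h))"
  shows "hA (\<lambda>h. commutator (K h) (F h))"
proof -
  have "hA (\<lambda>h. (\<lambda>_. -1) h \<cdot>\<^sub>m commutator (F h) (K h))"
    by (rule hA_smul) (use assms in \<open>auto simp: bnd_def\<close>)
  then show ?thesis
    by (rule hA_cong[rotated]) (simp add: comm_swap[OF alg_carrier[OF assms(2)] alg_carrier[OF assms(1)]])
qed

lemma hA_S_diag: assumes "g \<in> Gs" shows "hA (\<lambda>h. commutator (Sm (Ng h)) (mat_diag (Ng h) (g h)))"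
  unfolding hA_def
proof (intro bexI[of _ "\<lambda>h. mat_diag (Ng h) (\<lambda>i. (1/h) * (g h (Suc i) - g h i)) * Sm (Ng h)"] allI impI)
  fix h :: real assume h: "0 < h \<and> h \<le> 1"
  have per: "\<And>i. g h (i + Ng h) = g h i" using assms h unfolding Gs_def by auto
  show "commutator (Sm (Ng h)) (mat_diag (Ng h) (g h)) =
        h \<cdot>\<^sub>m (mat_diag (Ng h) (\<lambda>i. (1/h) * (g h (Suc i) - g h i)) * Sm (Ng h))"
    by (rule comm_S_diag[of "g h" "Ng h", OF per]) (use h in simp)
next
  show "(\<lambda>h. mat_diag (Ng h) (\<lambda>i. (1/h) * (g h (Suc i) - g h i)) * Sm (Ng h)) \<in> alg"
  proof -
    have d: "(\<lambda>h. mat_diag (Ng h) (\<lambda>i. (1/h) * (g h (Suc i) - g h i))) \<in> alg"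
      using alg.diag[OF Gs_dS[OF assms]] by simp
    then show ?thesis by (intro alg.mul alg.shS)
  qed
qed

lemma hA_T_diag: assumes "g \<in> Gs" shows "hA (\<lambda>h. commutator (Tm (Ng h)) (mat_diag (Ng h) (g h)))"
  unfolding hA_def
proof (intro bexI[of _ "\<lambda>h. (-1) \<cdot>\<^sub>m (Tm (Ng h) * mat_diag (Ng h) (\<lambda>i. (1/h) * (g h (Suc i) - g h i)))"] allI impI)
  fix h :: real assume h: "0 < h \<and> h \<le> 1"
  have per: "\<And>i. g h (i + Ng h) = g h i" using assms h unfolding Gs_def by auto
  show "commutator (Tm (Ng h)) (mat_diag (Ng h) (g h)) =
        h \<cdot>\<^sub>m ((-1) \<cdot>\<^sub>m (Tm (Ng h) * mat_diag (Ng h) (\<lambda>i. (1/h) * (g h (Suc i) - g h i))))"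
    by (rule comm_T_diag[of "g h" "Ng h", OF per]) (use h in simp)
next
  show "(\<lambda>h. (-1) \<cdot>\<^sub>m (Tm (Ng h) * mat_diag (Ng h) (\<lambda>i. (1/h) * (g h (Suc i) - g h i)))) \<in> alg"
  proof -
    have d: "(\<lambda>h. mat_diag (Ng h) (\<lambda>i. (1/h) * (g h (Suc i) - g h i))) \<in> alg"
      using alg.diag[OF Gs_dS[OF assms]] by simp
    then show ?thesis by (intro alg.smul alg.mul alg.shT) (auto simp: bnd_def)
  qed
qed

lemma hA_comm_zero: assumes "\<And>h. commutator (F h) (K h) = 0\<^sub>m (Ng h) (Ng h)"
  shows "hA (\<lambda>h. commutator (F h) (K h))"
  using hA_zero by (simp add: assms)

lemma diag_comm0: "commutator (mat_diag n f) (mat_diag n (g :: nat \<Rightarrow> real)) = 0\<^sub>m n n"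
  unfolding commutator_def by (simp add: mult.commute)

lemma ST_comm0: "commutator (Sm n) (Tm n) = 0\<^sub>m n n" "commutator (Tm n) (Sm n) = 0\<^sub>m n n"
  unfolding commutator_def by (simp_all add: Sm_Tm Tm_Sm)

lemma comm_gen: assumes "isgen F" "isgen K" shows "hA (\<lambda>h. commutator (F h) (K h))"
proof -
  have SA: "(\<lambda>h. Sm (Ng h)) \<in> alg" "(\<lambda>h. Tm (Ng h)) \<in> alg" by (auto intro: alg.intros)
  have DA: "g \<in> Gs \<Longrightarrow> (\<lambda>h. mat_diag (Ng h) (g h)) \<in> alg" for g by (rule alg.diag)
  from assms(1) show ?thesis unfolding isgen_def
  proof (elim disjE bexE)
    fix g assume g: "g \<in> Gs" and F: "F = (\<lambda>h. mat_diag (Ng h) (g h))"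
    from assms(2) show ?thesis unfolding isgen_def
    proof (elim disjE bexE)
      fix g2 assume "K = (\<lambda>h. mat_diag (Ng h) (g2 h))" then show ?thesis
        using F by (intro hA_comm_zero) (simp add: diag_comm0)
    next
      assume "K = (\<lambda>h. Sm (Ng h))" then show ?thesis
        using F hA_swap[OF SA(1) DA[OF g] hA_S_diag[OF g]] by simp
    next
      assume "K = (\<lambda>h. Tm (Ng h))" then show ?thesis
        using F hA_swap[OF SA(2) DA[OF g] hA_T_diag[OF g]] by simp
    qed
  next
    assume F: "F = (\<lambda>h. Sm (Ng h))"
    from assms(2) show ?thesis unfolding isgen_def
    proof (elim disjE bexE)
      fix g2 assume "g2 \<in> Gs" "K = (\<lambda>h. mat_diag (Ng h) (g2 h))" then show ?thesis
        using F hA_S_diag by simp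
    next
      assume "K = (\<lambda>h. Sm (Ng h))" then show ?thesis
        using F by (intro hA_comm_zero) (simp add: comm_self)
    next
      assume "K = (\<lambda>h. Tm (Ng h))" then show ?thesis
        using F by (intro hA_comm_zero) (simp add: ST_comm0)
    qed
  next
    assume F: "F = (\<lambda>h. Tm (Ng h))"
    from assms(2) show ?thesis unfolding isgen_def
    proof (elim disjE bexE)
      fix g2 assume "g2 \<in> Gs" "K = (\<lambda>h. mat_diag (Ng h) (g2 h))" then show ?thesis
        using F hA_T_diag by simp
    next
      assume "K = (\<lambda>h. Sm (Ng h))" then show ?thesis
        using F by (intro hA_comm_zero) (simp add: ST_comm0)
    next
      assume "K = (\<lambda>h. Tm (Ng h))" then show ?thesis
        using F by (intro hA_comm_zero) (simp add: comm_self)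
    qed
  qed
qed

lemma comm_alg_gen: assumes "F \<in> alg" "isgen K" shows "hA (\<lambda>h. commutator (F h) (K h))"
  using assms(1)
proof (induction rule: alg.induct)
  case (diag g)
  then show ?case using comm_gen[OF _ assms(2)] unfolding isgen_def by blast
next
  case shS
  then show ?case using comm_gen[OF _ assms(2)] unfolding isgen_def by blast
next
  case shT
  then show ?case using comm_gen[OF _ assms(2)] unfolding isgen_def by blast
next
  case (smul c F)
  have "hA (\<lambda>h. c h \<cdot>\<^sub>m commutator (F h) (K h))" by (rule hA_smul[OF smul(1) smul(3)])
  then show ?case
    by (rule hA_cong[rotated]) (simp add: comm_smult_left[OF alg_carrier[OF smul(2)] alg_carrier[OF isgen_alg[OF assms(2)]]])
next
  case (add F1 F2)
  have "hA (\<lambda>h. commutator (F1 h) (K h) + commutator (F2 h) (K h))" by (rule hA_add[OF add(3) add(4)])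
  then show ?case
    by (rule hA_cong[rotated]) (simp add: comm_add_left[OF alg_carrier[OF add(1)] alg_carrier[OF add(2)] alg_carrier[OF isgen_alg[OF assms(2)]]])
next
  case (mul F1 F2)
  have "hA (\<lambda>h. F1 h * commutator (F2 h) (K h) + commutator (F1 h) (K h) * F2 h)"
    by (rule hA_add[OF hA_mulL[OF mul(1) mul(4)] hA_mulR[OF mul(2) mul(3)]])
  then show ?case
    by (rule hA_cong[rotated]) (simp add: comm_mul_left[OF alg_carrier[OF mul(1)] alg_carrier[OF mul(2)] alg_carrier[OF isgen_alg[OF assms(2)]]])
qed

lemma comm_alg: assumes "K \<in> alg" "F \<in> alg" shows "hA (\<lambda>h. commutator (F h) (K h))"
  using assms(1)
proof (induction rule: alg.induct)
  case (diag g)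
  then show ?case using comm_alg_gen[OF assms(2)] unfolding isgen_def by blast
next
  case shS
  then show ?case using comm_alg_gen[OF assms(2)] unfolding isgen_def by blast
next
  case shT
  then show ?case using comm_alg_gen[OF assms(2)] unfolding isgen_def by blast
next
  case (smul c K)
  have "hA (\<lambda>h. c h \<cdot>\<^sub>m commutator (F h) (K h))" by (rule hA_smul[OF smul(1) smul(3)])
  then show ?case
    by (rule hA_cong[rotated]) (simp add: comm_smult_right[OF alg_carrier[OF assms(2)] alg_carrier[OF smul(2)]])
next
  case (add K1 K2)
  have "hA (\<lambda>h. commutator (F h) (K1 h) + commutator (F h) (K2 h))" by (rule hA_add[OF add(3) add(4)])
  then show ?case
    by (rule hA_cong[rotated]) (simp add: comm_add_right[OF alg_carrier[OF assms(2)] alg_carrier[OF add(1)] alg_carrier[OF add(2)]])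
next
  case (mul K1 K2)
  have "hA (\<lambda>h. K1 h * commutator (F h) (K2 h) + commutator (F h) (K1 h) * K2 h)"
    by (rule hA_add[OF hA_mulL[OF mul(1) mul(4)] hA_mulR[OF mul(2) mul(3)]])
  then show ?case
    by (rule hA_cong[rotated]) (simp add: comm_mul_right[OF alg_carrier[OF assms(2)] alg_carrier[OF mul(1)] alg_carrier[OF mul(2)]])
qed

end


definition dC :: "real \<Rightarrow> (real \<Rightarrow> real) \<Rightarrow> real \<Rightarrow> real" where
  "dC d F = (\<lambda>x. F (x + d) - F x)"

lemma dC_deriv_at: fixes F :: "real \<Rightarrow> real" assumes "\<And>y. F differentiable (at y)"
  shows "(dC d F has_real_derivative (dC d (deriv F) x)) (at x)"
proof -
  have "(F has_real_derivative deriv F (x + d)) (at (x + d))"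
    using assms DERIV_deriv_iff_real_differentiable by blast
  then have a: "((\<lambda>x. F (x + d)) has_real_derivative deriv F (x + d)) (at x)"
    by (simp add: DERIV_shift)
  have b: "(F has_real_derivative deriv F x) (at x)"
    using assms DERIV_deriv_iff_real_differentiable by blast
  show ?thesis unfolding dC_def using DERIV_diff[OF a b] by simp
qed

lemma deriv_dC: fixes F :: "real \<Rightarrow> real" assumes "\<And>y. F differentiable (at y)"
  shows "deriv (dC d F) = dC d (deriv F)"
  using dC_deriv_at[OF assms] by (intro ext DERIV_imp_deriv) 

lemma dC_differentiable: fixes F :: "real \<Rightarrow> real" assumes "\<And>y. F differentiable (at y)"
  shows "dC d F differentiable (at x)"
  using dC_deriv_at[OF assms] real_differentiable_def by blast

lemma derivs_dC: fixes g :: "real \<Rightarrow> real" assumes "\<And>j x. ((deriv ^^ j) g) differentiable (at x)"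
  shows "(deriv ^^ j) (dC d g) = dC d ((deriv ^^ j) g)"
proof (induction j)
  case (Suc j)
  have "(deriv ^^ Suc j) (dC d g) = deriv (dC d ((deriv ^^ j) g))" using Suc by simp
  also have "\<dots> = dC d (deriv ((deriv ^^ j) g))" by (rule deriv_dC) (rule assms)
  finally show ?case by simp
qed simp

lemma smooth_dC: fixes g :: "real \<Rightarrow> real" assumes "\<And>j x. ((deriv ^^ j) g) differentiable (at x)"
  shows "((deriv ^^ j) (dC d g)) differentiable (at x)"
  unfolding derivs_dC[OF assms] by (rule dC_differentiable) (rule assms)

lemma mvt_bound: fixes F :: "real \<Rightarrow> real" assumes "\<And>y. F differentiable (at y)" "\<And>y. \<bar>deriv F y\<bar> \<le> M" "0 \<le> d"
  shows "\<bar>F (x + d) - F x\<bar> \<le> M * d"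
proof (cases "d = 0")
  case True then show ?thesis by simp
next
  case False
  then have "x < x + d" using assms(3) by simp
  from MVT2[OF this, of F "deriv F"] obtain z where "F (x + d) - F x = (x + d - x) * deriv F z"
    using assms(1) DERIV_deriv_iff_real_differentiable by blast
  then have "\<bar>F (x + d) - F x\<bar> = d * \<bar>deriv F z\<bar>" using assms(3) by (simp add: abs_mult)
  also have "\<dots> \<le> d * M" using assms by (intro mult_left_mono) auto
  finally show ?thesis by (simp add: mult.commute)
qed

lemma diff_bound: fixes g :: "real \<Rightarrow> real"
  assumes "\<And>j x. ((deriv ^^ j) g) differentiable (at x)" "\<And>y. \<bar>(deriv ^^ k) g y\<bar> \<le> M" "0 \<le> d"
  shows "\<bar>(dC d ^^ k) g x\<bar> \<le> M * d ^ k"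
  using assms(1,2)
proof (induction k arbitrary: g M x)
  case 0
  then show ?case by simp
next
  case (Suc k)
  have sm: "\<And>j x. ((deriv ^^ j) (dC d g)) differentiable (at x)"
    by (rule smooth_dC) (rule Suc.prems(1))
  have bd: "\<bar>(deriv ^^ k) (dC d g) y\<bar> \<le> M * d" for y
  proof -
    have "(deriv ^^ k) (dC d g) y = (deriv ^^ k) g (y + d) - (deriv ^^ k) g y"
      by (simp only: derivs_dC[OF Suc.prems(1)]) (simp add: dC_def)
    also have "\<bar>\<dots>\<bar> \<le> M * d"
    proof (rule mvt_bound)
      show "\<And>y. (deriv ^^ k) g differentiable (at y)" by (rule Suc.prems(1))
      show "\<And>y. \<bar>deriv ((deriv ^^ k) g) y\<bar> \<le> M" using Suc.prems(2) by simp
    qed (rule assms(3))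
    finally show ?thesis .
  qed
  have "(dC d ^^ Suc k) g = (dC d ^^ k) (dC d g)" by (simp only: funpow_Suc_right o_apply)
  then have "\<bar>(dC d ^^ Suc k) g x\<bar> \<le> M * d * d ^ k" using Suc.IH[OF sm bd] by simp
  then show ?case by (simp add: algebra_simps)
qed

lemma per_nat: fixes G :: "real \<Rightarrow> real" assumes "\<And>x. G (x + p) = G x" shows "G (x + real n * p) = G x \<and> G (x - real n * p) = G x"
proof (induction n)
  case (Suc n)
  have "G (x + real (Suc n) * p) = G ((x + real n * p) + p)" by (simp add: algebra_simps)
  moreover have "G (x - real n * p) = G ((x - real (Suc n) * p) + p)" by (simp add: algebra_simps)
  ultimately show ?case using Suc assms by simp
qed simp

lemma per_int: fixes G :: "real \<Rightarrow> real" assumes "\<And>x. G (x + p) = G x" shows "G (x + real_of_int m * p) = G x"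
proof (cases "m \<ge> 0")
  case True
  then obtain n where "m = int n" using nonneg_int_cases by blast
  then show ?thesis using per_nat[of G p, OF assms] by simp
next
  case False
  then obtain n where "m = - int n" by (metis nonneg_int_cases neg_0_le_iff_le less_le_not_le linorder_not_le minus_minus)
  then show ?thesis using per_nat[of G p, OF assms] by simp
qed

lemma per_bounded: fixes G :: "real \<Rightarrow> real" assumes "\<And>x. G (x + p) = G x" "0 < p" "\<And>x. isCont G x"
  shows "\<exists>M. \<forall>x. \<bar>G x\<bar> \<le> M"
proof -
  have "\<forall>x. 0 \<le> x \<and> x \<le> p \<longrightarrow> isCont (\<lambda>x. \<bar>G x\<bar>) x" using assms(3) by (auto intro: continuous_intros)
  from isCont_bounded[OF _ this] assms(2) obtain M where M: "\<forall>x. 0 \<le> x \<and> x \<le> p \<longrightarrow> \<bar>G x\<bar> \<le> M" by auto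
  show ?thesis
  proof (intro exI allI)
    fix x
    define m where "m = \<lfloor>x / p\<rfloor>"
    define t where "t = x - real_of_int m * p"
    have m1: "real_of_int m \<le> x / p" unfolding m_def by (rule of_int_floor_le)
    have m2: "x / p < real_of_int m + 1" unfolding m_def by (rule real_of_int_floor_add_one_gt)
    have "real_of_int m * p \<le> x" using m1 assms(2) by (simp add: le_divide_eq)
    moreover have "x < (real_of_int m + 1) * p" using m2 assms(2) by (simp add: divide_less_eq)
    ultimately have t: "0 \<le> t" "t \<le> p" unfolding t_def by (simp_all add: distrib_right)
    have "G x = G (t + real_of_int m * p)" unfolding t_def by simp
    also have "\<dots> = G t" by (rule per_int[of G p, OF assms(1)])
    finally show "\<bar>G x\<bar> \<le> M" using M t by simp
  qed
qed

lemma deriv_periodic: fixes G :: "real \<Rightarrow> real" assumes "\<And>x. G (x + p) = G x" "\<And>y. G differentiable (at y)"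
  shows "deriv G (x + p) = deriv G x"
proof -
  have "(G has_real_derivative deriv G (x + p)) (at (x + p))"
    using assms(2) DERIV_deriv_iff_real_differentiable by blast
  then have "((\<lambda>x. G (x + p)) has_real_derivative deriv G (x + p)) (at x)"
    by (simp add: DERIV_shift)
  moreover have "(\<lambda>x. G (x + p)) = G" using assms(1) by auto
  ultimately show ?thesis by (metis DERIV_imp_deriv)
qed

lemma smooth_periodic_bounded:
  assumes "smooth_fun f" "periodic_fun p f" "0 < p"
  shows "\<exists>M. \<forall>x. \<bar>(deriv ^^ k) f x\<bar> \<le> M"
proof -
  have sm: "\<And>j x. ((deriv ^^ j) f) differentiable (at x)" using assms(1) unfolding smooth_fun_def by blast
  have per: "(deriv ^^ j) f (x + p) = (deriv ^^ j) f x" for j x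
  proof (induction j arbitrary: x)
    case 0 then show ?case using assms(2) unfolding periodic_fun_def by simp
  next
    case (Suc j) then show ?case using deriv_periodic[of "(deriv ^^ j) f" p x] sm by simp
  qed
  show ?thesis
  proof (rule per_bounded[of "(deriv ^^ k) f" p, OF per[of k] assms(3)])
    fix x show "isCont ((deriv ^^ k) f) x"
      using sm[of k x] by (metis DERIV_deriv_iff_real_differentiable DERIV_isCont)
  qed
qed

lemma dS_grid: "(dS ^^ k) (\<lambda>i. f (a + d * real i)) = (\<lambda>i. (dC d ^^ k) f (a + d * real i))"
proof (induction k arbitrary: f)
  case (Suc k)
  have e: "dS (\<lambda>i. f (a + d * real i)) = (\<lambda>i. (dC d f) (a + d * real i))"
    by (auto simp: dS_def dC_def algebra_simps)
  have "(dS ^^ Suc k) (\<lambda>i. f (a + d * real i)) = (dS ^^ k) (dS (\<lambda>i. f (a + d * real i)))"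
    by (simp only: funpow_Suc_right o_apply)
  also have "\<dots> = (\<lambda>i. (dC d ^^ k) (dC d f) (a + d * real i))" by (simp only: e Suc.IH)
  also have "\<dots> = (\<lambda>i. (dC d ^^ Suc k) f (a + d * real i))" by (simp only: funpow_Suc_right o_apply)
  finally show ?case .
qed simp



lemma pow_carrier: "A \<in> carrier_mat n n \<Longrightarrow> A ^\<^sub>m k \<in> carrier_mat n n"
  by (rule carrier_matI) auto

lemma one_smult_m: "1 \<cdot>\<^sub>m (A :: real mat) = A"
  by (rule eq_matI) auto

lemma smult_pow: assumes "(A :: real mat) \<in> carrier_mat n n"
  shows "(c \<cdot>\<^sub>m A) ^\<^sub>m k = (c ^ k) \<cdot>\<^sub>m (A ^\<^sub>m k)"
proof (induction k)
  case 0
  show ?case using assms by (simp add: one_smult_m)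
next
  case (Suc k)
  have "(c \<cdot>\<^sub>m A) ^\<^sub>m Suc k = (c ^ k \<cdot>\<^sub>m A ^\<^sub>m k) * (c \<cdot>\<^sub>m A)" using Suc by simp
  also have "\<dots> = c ^ k \<cdot>\<^sub>m (A ^\<^sub>m k * (c \<cdot>\<^sub>m A))"
    by (rule mult_smult_assoc_mat[of _ n n _ n]) (use assms pow_carrier[OF assms] in auto)
  also have "\<dots> = c ^ k \<cdot>\<^sub>m (c \<cdot>\<^sub>m (A ^\<^sub>m k * A))"
    using assms pow_carrier[OF assms] by (simp add: mult_smult_distrib[of _ n n])
  also have "\<dots> = (c ^ Suc k) \<cdot>\<^sub>m (A ^\<^sub>m Suc k)" by (simp add: smult_smult_m mult.commute)
  finally show ?case .
qed

lemma DF_carrier[simp]: "DF N \<in> carrier_mat N N" unfolding DF_def circM_def by auto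
lemma DB_carrier[simp]: "DB N \<in> carrier_mat N N" unfolding DB_def DF_def circM_def by auto
lemma D2_carrier[simp]: "D2 N \<in> carrier_mat N N" unfolding D2_def by (rule mult_carrier_mat[of _ N N]) auto
lemma Dk_carrier[simp]: "Dk N m \<in> carrier_mat N N"
  unfolding Dk_def by (auto intro!: pow_carrier mult_carrier_mat)

lemma hDF_eq: "h \<cdot>\<^sub>m DF N = (h * real N) \<cdot>\<^sub>m Sm N + (- (h * real N)) \<cdot>\<^sub>m 1\<^sub>m N"
  by (rule eq_matI) (auto simp: DF_def circM_def Sm_def algebra_simps)

lemma hDB_eq: "h \<cdot>\<^sub>m DB N = (h * real N) \<cdot>\<^sub>m 1\<^sub>m N + (- (h * real N)) \<cdot>\<^sub>m Tm N"
  by (rule eq_matI) (auto simp: DB_def DF_def circM_def Tm_def algebra_simps)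

lemma hhD2_eq: "(h * h) \<cdot>\<^sub>m D2 N = (h \<cdot>\<^sub>m DB N) * (h \<cdot>\<^sub>m DF N)"
  unfolding D2_def
  by (simp add: mult_smult_assoc_mat[of _ N N _ N] mult_smult_distrib[of _ N N _ N] smult_smult_m)

locale gridb = grid Ng for Ng +
  fixes c1 c2 :: real
  assumes c1: "0 < c1"
    and Nb: "\<And>h. 0 < h \<Longrightarrow> h \<le> 1 \<Longrightarrow> c1 / h \<le> real (Ng h) \<and> real (Ng h) \<le> c2 / h"
begin

lemma Npos: "0 < h \<Longrightarrow> h \<le> 1 \<Longrightarrow> 0 < real (Ng h)"
  using Nb[of h] c1 by (smt (verit) divide_pos_pos)

lemma hN_bnd: "bnd (\<lambda>h. h * real (Ng h))"
  unfolding bnd_def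
proof (intro exI[of _ c2] allI impI)
  fix h :: real assume h: "0 < h \<and> h \<le> 1"
  then have "real (Ng h) \<le> c2 / h" using Nb by auto
  then have "h * real (Ng h) \<le> c2" using h by (simp add: le_divide_eq mult.commute)
  then show "\<bar>h * real (Ng h)\<bar> \<le> c2" using h by simp
qed

lemma hN_bnd': "bnd (\<lambda>h. - (h * real (Ng h)))"
  using hN_bnd unfolding bnd_def by simp

lemma grid_Gs:
  assumes ab: "a < b" and sm: "smooth_fun f" and per: "periodic_fun (b - a) f"
  shows "(\<lambda>h i. f (grid_pt a b (Ng h) i)) \<in> Gs"
proof -
  have perN: "f (grid_pt a b (Ng h) (i + Ng h)) = f (grid_pt a b (Ng h) i)" if h: "0 < h \<and> h \<le> 1" for h i
  proof -
    have N: "real (Ng h) \<noteq> 0" using Npos h by force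
    have "grid_pt a b (Ng h) (i + Ng h) = grid_pt a b (Ng h) i + (b - a)"
      unfolding grid_pt_def using N by (simp add: field_simps)
    then show ?thesis using per unfolding periodic_fun_def by simp
  qed
  have bound: "\<exists>M. \<forall>h. 0 < h \<and> h \<le> 1 \<longrightarrow> (\<forall>i. \<bar>(dS ^^ k) (\<lambda>i. f (grid_pt a b (Ng h) i)) i\<bar> \<le> M * h ^ k)" for k
  proof -
    obtain Mk where Mk: "\<forall>x. \<bar>(deriv ^^ k) f x\<bar> \<le> Mk"
      using smooth_periodic_bounded[OF sm per] ab by auto
    have smj: "\<And>j x. ((deriv ^^ j) f) differentiable (at x)" using sm unfolding smooth_fun_def by blast
    show ?thesis
    proof (intro exI[of _ "max Mk 0 * ((b - a) / c1) ^ k"] allI impI)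
      fix h :: real and i assume h: "0 < h \<and> h \<le> 1"
      define d where "d = (b - a) / real (Ng h)"
      have Np: "0 < real (Ng h)" using Npos h by auto
      have d0: "0 \<le> d" unfolding d_def using ab Np by simp
      have g: "(\<lambda>i. f (grid_pt a b (Ng h) i)) = (\<lambda>i. f (a + d * real i))"
        unfolding grid_pt_def d_def by (simp add: field_simps)
      have "\<bar>(dS ^^ k) (\<lambda>i. f (grid_pt a b (Ng h) i)) i\<bar> = \<bar>(dC d ^^ k) f (a + d * real i)\<bar>"
        unfolding g dS_grid by simp
      also have "\<dots> \<le> max Mk 0 * d ^ k"
        by (rule diff_bound[OF smj _ d0]) (use Mk in \<open>auto intro: order_trans\<close>)
      also have "\<dots> \<le> max Mk 0 * ((b - a) / c1 * h) ^ k"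
      proof (intro mult_left_mono power_mono)
        have "c1 / h \<le> real (Ng h)" using Nb h by auto
        then have "(b - a) / real (Ng h) \<le> (b - a) / (c1 / h)"
        proof (rule divide_left_mono)
          show "0 < real (Ng h) * (c1 / h)" using Np c1 h by (intro mult_pos_pos divide_pos_pos) auto
        qed (use ab \<open>c1 / h \<le> real (Ng h)\<close> in auto)
        then show "d \<le> (b - a) / c1 * h" unfolding d_def by simp
      qed (use d0 in auto)
      also have "\<dots> = max Mk 0 * ((b - a) / c1) ^ k * h ^ k" by (simp only: power_mult_distrib mult.assoc)
      finally show "\<bar>(dS ^^ k) (\<lambda>i. f (grid_pt a b (Ng h) i)) i\<bar> \<le> max Mk 0 * ((b - a) / c1) ^ k * h ^ k" .
    qed
  qed
  show ?thesis unfolding Gs_def using perN bound by auto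
qed

end


context gridb begin

definition inA :: "(real \<Rightarrow> real mat) \<Rightarrow> bool" where
  "inA P \<longleftrightarrow> (\<exists>R\<in>alg. \<forall>h. 0 < h \<and> h \<le> 1 \<longrightarrow> P h = R h)"

definition invA :: "(real \<Rightarrow> real mat) \<Rightarrow> bool" where
  "invA P \<longleftrightarrow> (\<exists>R\<in>alg. \<forall>h. 0 < h \<and> h \<le> 1 \<longrightarrow> P h = (1 / h) \<cdot>\<^sub>m R h)"

lemma inA_alg: "F \<in> alg \<Longrightarrow> inA F" unfolding inA_def by auto

lemma inA_add: assumes "inA P" "inA Q" shows "inA (\<lambda>h. P h + Q h)"
proof -
  obtain R1 where R1: "R1 \<in> alg" "\<forall>h. 0 < h \<and> h \<le> 1 \<longrightarrow> P h = R1 h" using assms(1) unfolding inA_def by blast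
  obtain R2 where R2: "R2 \<in> alg" "\<forall>h. 0 < h \<and> h \<le> 1 \<longrightarrow> Q h = R2 h" using assms(2) unfolding inA_def by blast
  show ?thesis unfolding inA_def
    by (rule bexI[of _ "\<lambda>h. R1 h + R2 h"]) (use R1 R2 in \<open>auto intro: alg.add\<close>)
qed

lemma inA_mul: assumes "inA P" "inA Q" shows "inA (\<lambda>h. P h * Q h)"
proof -
  obtain R1 where R1: "R1 \<in> alg" "\<forall>h. 0 < h \<and> h \<le> 1 \<longrightarrow> P h = R1 h" using assms(1) unfolding inA_def by blast
  obtain R2 where R2: "R2 \<in> alg" "\<forall>h. 0 < h \<and> h \<le> 1 \<longrightarrow> Q h = R2 h" using assms(2) unfolding inA_def by blast
  show ?thesis unfolding inA_def
    by (rule bexI[of _ "\<lambda>h. R1 h * R2 h"]) (use R1 R2 in \<open>auto intro: alg.mul\<close>)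
qed

lemma inA_smul: assumes "bnd c" "inA P" shows "inA (\<lambda>h. c h \<cdot>\<^sub>m P h)"
proof -
  obtain R1 where R1: "R1 \<in> alg" "\<forall>h. 0 < h \<and> h \<le> 1 \<longrightarrow> P h = R1 h" using assms(2) unfolding inA_def by blast
  show ?thesis unfolding inA_def
    by (rule bexI[of _ "\<lambda>h. c h \<cdot>\<^sub>m R1 h"]) (use R1 assms(1) in \<open>auto intro: alg.smul\<close>)
qed

lemma inA_cong: "(\<And>h. 0 < h \<and> h \<le> 1 \<Longrightarrow> P h = Q h) \<Longrightarrow> inA Q \<Longrightarrow> inA P"
  unfolding inA_def by auto

lemma one_alg: "(\<lambda>h. 1\<^sub>m (Ng h)) \<in> alg"
proof -
  have "(\<lambda>h. Sm (Ng h) * Tm (Ng h)) \<in> alg" by (intro alg.intros)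
  then show ?thesis by (simp add: Sm_Tm)
qed

lemma alg_pow: "R \<in> alg \<Longrightarrow> (\<lambda>h. R h ^\<^sub>m k) \<in> alg"
proof (induction k)
  case 0
  have "dim_row (R h) = Ng h" for h using alg_carrier[OF 0] by (rule carrier_matD)
  then show ?case using one_alg by simp
next
  case (Suc k)
  then show ?case by (simp add: alg.mul)
qed

lemma inA_pow: assumes "inA P" shows "inA (\<lambda>h. P h ^\<^sub>m k)"
proof -
  obtain R1 where R1: "R1 \<in> alg" "\<forall>h. 0 < h \<and> h \<le> 1 \<longrightarrow> P h = R1 h" using assms unfolding inA_def by blast
  show ?thesis unfolding inA_def
    by (rule bexI[of _ "\<lambda>h. R1 h ^\<^sub>m k"]) (use R1 alg_pow in auto)
qed

lemma hDF_inA: "inA (\<lambda>h. h \<cdot>\<^sub>m DF (Ng h))"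
  unfolding hDF_eq
  by (intro inA_add inA_smul hN_bnd hN_bnd' inA_alg alg.shS one_alg)

lemma hDB_inA: "inA (\<lambda>h. h \<cdot>\<^sub>m DB (Ng h))"
  unfolding hDB_eq
  by (intro inA_add inA_smul hN_bnd hN_bnd' inA_alg alg.shT one_alg)

lemma hhD2_inA: "inA (\<lambda>h. (h * h) \<cdot>\<^sub>m D2 (Ng h))"
  unfolding hhD2_eq by (intro inA_mul hDF_inA hDB_inA)

lemma hDk_inA: "inA (\<lambda>h. h ^ m \<cdot>\<^sub>m Dk (Ng h) m)"
proof (cases "even m")
  case True
  then obtain j where m: "m = 2 * j" by blast
  have "inA (\<lambda>h. ((h * h) \<cdot>\<^sub>m D2 (Ng h)) ^\<^sub>m j)" by (intro inA_pow hhD2_inA)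
  then show ?thesis
    by (rule inA_cong[rotated]) (simp add: m Dk_def smult_pow[OF D2_carrier] power_mult power2_eq_square)
next
  case False
  then obtain j where m: "m = 2 * j + 1" using oddE by blast
  have "inA (\<lambda>h. (h \<cdot>\<^sub>m DF (Ng h)) * ((h * h) \<cdot>\<^sub>m D2 (Ng h)) ^\<^sub>m j)" by (intro inA_mul inA_pow hhD2_inA hDF_inA)
  then show ?thesis
  proof (rule inA_cong[rotated])
    fix h :: real
    let ?N = "Ng h"
    have "(h \<cdot>\<^sub>m DF ?N) * ((h * h) \<cdot>\<^sub>m D2 ?N) ^\<^sub>m j = (h \<cdot>\<^sub>m DF ?N) * ((h * h) ^ j \<cdot>\<^sub>m D2 ?N ^\<^sub>m j)"
      by (simp add: smult_pow[OF D2_carrier])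
    also have "\<dots> = h \<cdot>\<^sub>m ((h * h) ^ j \<cdot>\<^sub>m (DF ?N * D2 ?N ^\<^sub>m j))"
      using pow_carrier[OF D2_carrier[of ?N], of j]
      by (simp add: mult_smult_assoc_mat[of _ ?N ?N _ ?N] mult_smult_distrib[of _ ?N ?N _ ?N] smult_smult_m mult.commute)
    also have "\<dots> = h ^ m \<cdot>\<^sub>m Dk ?N m"
      using False by (simp add: smult_smult_m Dk_def m power_mult power2_eq_square)
    finally show "h ^ m \<cdot>\<^sub>m Dk ?N m = (h \<cdot>\<^sub>m DF ?N) * ((h * h) \<cdot>\<^sub>m D2 ?N) ^\<^sub>m j" by simp
  qed
qed

lemma obs_list:
  assumes "\<And>m. m \<in> set xs \<Longrightarrow> (\<lambda>h i. y m (grid_pt a b (Ng h) i)) \<in> Gs"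
  shows "inA (\<lambda>h. foldr (\<lambda>m S. S + (h ^ m) \<cdot>\<^sub>m (grid_diag a b (Ng h) (y m) * Dk (Ng h) m)) xs (0\<^sub>m (Ng h) (Ng h)))"
  using assms
proof (induction xs)
  case Nil
  have "inA (\<lambda>h. (\<lambda>_. 0) h \<cdot>\<^sub>m 1\<^sub>m (Ng h))" by (intro inA_smul inA_alg one_alg) (auto simp: bnd_def)
  then show ?case by (rule inA_cong[rotated]) (rule eq_matI, auto)
next
  case (Cons m xs)
  have d: "inA (\<lambda>h. grid_diag a b (Ng h) (y m))"
    unfolding grid_diag_def using alg.diag[OF Cons.prems[of m]] by (intro inA_alg) simp
  have "inA (\<lambda>h. foldr (\<lambda>m S. S + (h ^ m) \<cdot>\<^sub>m (grid_diag a b (Ng h) (y m) * Dk (Ng h) m)) xs (0\<^sub>m (Ng h) (Ng h))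
     + grid_diag a b (Ng h) (y m) * (h ^ m \<cdot>\<^sub>m Dk (Ng h) m))"
    using Cons by (intro inA_add inA_mul d hDk_inA) auto
  then show ?case
  proof (rule inA_cong[rotated])
    fix h :: real
    show "foldr (\<lambda>m S. S + (h ^ m) \<cdot>\<^sub>m (grid_diag a b (Ng h) (y m) * Dk (Ng h) m)) (m # xs) (0\<^sub>m (Ng h) (Ng h)) =
      foldr (\<lambda>m S. S + (h ^ m) \<cdot>\<^sub>m (grid_diag a b (Ng h) (y m) * Dk (Ng h) m)) xs (0\<^sub>m (Ng h) (Ng h))
     + grid_diag a b (Ng h) (y m) * (h ^ m \<cdot>\<^sub>m Dk (Ng h) m)"
      by (simp add: grid_diag_def mult_smult_distrib[OF mat_diag_dim Dk_carrier])
  qed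
qed

lemma invA_of: "inA P \<Longrightarrow> (\<And>h. 0 < h \<and> h \<le> 1 \<Longrightarrow> F h = (1 / h) \<cdot>\<^sub>m P h) \<Longrightarrow> invA F"
  unfolding inA_def invA_def by auto

lemma opA_invA: "invA (\<lambda>h. opA (Ng h) h)"
proof (rule invA_of)
  show "inA (\<lambda>h. (\<lambda>_. -1) h \<cdot>\<^sub>m ((h * h) \<cdot>\<^sub>m D2 (Ng h)))"
    by (intro inA_smul hhD2_inA) (auto simp: bnd_def)
  fix h :: real assume "0 < h \<and> h \<le> 1"
  then show "opA (Ng h) h = (1 / h) \<cdot>\<^sub>m ((\<lambda>_. -1) h \<cdot>\<^sub>m ((h * h) \<cdot>\<^sub>m D2 (Ng h)))"
    by (simp add: opA_def smult_smult_m)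
qed

lemma opB_invA: assumes "a < b" "smooth_fun V" "periodic_fun (b - a) V"
  shows "invA (\<lambda>h. opB a b (Ng h) h V)"
proof (rule invA_of)
  show "inA (\<lambda>h. grid_diag a b (Ng h) V)"
    unfolding grid_diag_def using alg.diag[OF grid_Gs[OF assms]] by (intro inA_alg) simp
qed (simp add: opB_def)

lemma invA_comm: assumes "invA P" "invA Q" shows "invA (\<lambda>h. commutator (P h) (Q h))"
proof -
  obtain R1 where R1: "R1 \<in> alg" "\<And>h. 0 < h \<and> h \<le> 1 \<Longrightarrow> P h = (1 / h) \<cdot>\<^sub>m R1 h"
    using assms(1) unfolding invA_def by blast
  obtain R2 where R2: "R2 \<in> alg" "\<And>h. 0 < h \<and> h \<le> 1 \<Longrightarrow> Q h = (1 / h) \<cdot>\<^sub>m R2 h"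
    using assms(2) unfolding invA_def by blast
  obtain R3 where R3: "R3 \<in> alg" "\<And>h. 0 < h \<and> h \<le> 1 \<Longrightarrow> commutator (R1 h) (R2 h) = h \<cdot>\<^sub>m R3 h"
    using comm_alg[OF R2(1) R1(1)] unfolding hA_def by blast
  show ?thesis unfolding invA_def
  proof (intro bexI[OF _ R3(1)] allI impI)
    fix h :: real assume h: "0 < h \<and> h \<le> 1"
    have c1: "R1 h \<in> carrier_mat (Ng h) (Ng h)" "R2 h \<in> carrier_mat (Ng h) (Ng h)"
      using alg_carrier R1 R2 by auto
    have "commutator (P h) (Q h) = commutator ((1 / h) \<cdot>\<^sub>m R1 h) ((1 / h) \<cdot>\<^sub>m R2 h)" using R1 R2 h by simp
    also have "\<dots> = (1 / h) \<cdot>\<^sub>m commutator (R1 h) ((1 / h) \<cdot>\<^sub>m R2 h)"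
      using c1 by (intro comm_smult_left) auto
    also have "\<dots> = (1 / h) \<cdot>\<^sub>m ((1 / h) \<cdot>\<^sub>m commutator (R1 h) (R2 h))"
      using c1 by (simp add: comm_smult_right)
    also have "\<dots> = (1 / h) \<cdot>\<^sub>m R3 h" using R3 h by (simp add: smult_smult_m one_smult_m)
    finally show "commutator (P h) (Q h) = (1 / h) \<cdot>\<^sub>m R3 h" .
  qed
qed

lemma inA_comm: assumes "invA P" "inA Q" shows "inA (\<lambda>h. commutator (P h) (Q h))"
proof -
  obtain R1 where R1: "R1 \<in> alg" "\<And>h. 0 < h \<and> h \<le> 1 \<Longrightarrow> P h = (1 / h) \<cdot>\<^sub>m R1 h"
    using assms(1) unfolding invA_def by blast
  obtain R2 where R2: "R2 \<in> alg" "\<And>h. 0 < h \<and> h \<le> 1 \<Longrightarrow> Q h = R2 h"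
    using assms(2) unfolding inA_def by blast
  obtain R3 where R3: "R3 \<in> alg" "\<And>h. 0 < h \<and> h \<le> 1 \<Longrightarrow> commutator (R1 h) (R2 h) = h \<cdot>\<^sub>m R3 h"
    using comm_alg[OF R2(1) R1(1)] unfolding hA_def by blast
  show ?thesis unfolding inA_def
  proof (intro bexI[OF _ R3(1)] allI impI)
    fix h :: real assume h: "0 < h \<and> h \<le> 1"
    have c1: "R1 h \<in> carrier_mat (Ng h) (Ng h)" "R2 h \<in> carrier_mat (Ng h) (Ng h)"
      using alg_carrier R1 R2 by auto
    have "commutator (P h) (Q h) = commutator ((1 / h) \<cdot>\<^sub>m R1 h) (R2 h)" using R1 R2 h by simp
    also have "\<dots> = (1 / h) \<cdot>\<^sub>m commutator (R1 h) (R2 h)"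
      using c1 by (intro comm_smult_left) auto
    also have "\<dots> = R3 h" using R3 h by (simp add: smult_smult_m one_smult_m)
    finally show "commutator (P h) (Q h) = R3 h" .
  qed
qed

lemma nested_invA: assumes "invA X" "invA Y" shows "w \<noteq> [] \<Longrightarrow> invA (\<lambda>h. nested_comm (X h) (Y h) w)"
proof (induction w)
  case Nil then show ?case by simp
next
  case (Cons u ws)
  have U: "invA (\<lambda>h. if u then X h else Y h)" using assms by (cases u) auto
  show ?case
  proof (cases ws)
    case Nil
    then show ?thesis using U by simp
  next
    case (Cons v us)
    have "invA (\<lambda>h. commutator (if u then X h else Y h) (nested_comm (X h) (Y h) ws))"
      using Cons.IH U \<open>ws = v # us\<close> by (intro invA_comm) auto
    then show ?thesis using \<open>ws = v # us\<close> by simp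
  qed
qed

lemma iter_inA: assumes "invA X" "invA Y"
  shows "(\<And>w. w \<in> set ws \<Longrightarrow> w \<noteq> []) \<Longrightarrow> inA Ob \<Longrightarrow>
    inA (\<lambda>h. iter_comm (map (nested_comm (X h) (Y h)) ws) (Ob h))"
proof (induction ws arbitrary: Ob)
  case Nil
  then show ?case by (simp add: iter_comm_def)
next
  case (Cons w ws)
  have "inA (\<lambda>h. commutator (nested_comm (X h) (Y h) w) (Ob h))"
    using Cons.prems by (intro inA_comm nested_invA assms) auto
  then have "inA (\<lambda>h. iter_comm (map (nested_comm (X h) (Y h)) ws) (commutator (nested_comm (X h) (Y h) w) (Ob h)))"
    using Cons by auto
  then show ?case by (simp add: iter_comm_def)
qed

lemma inA_spec_bound: assumes "inA W" shows "\<exists>C. \<forall>h. 0 < h \<and> h \<le> 1 \<longrightarrow> spec_norm (W h) \<le> C"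
proof -
  obtain R where R: "R \<in> alg" "\<And>h. 0 < h \<and> h \<le> 1 \<Longrightarrow> W h = R h"
    using assms unfolding inA_def by blast
  obtain M where M: "M \<ge> 0" "\<forall>h. 0 < h \<and> h \<le> 1 \<longrightarrow>
   (\<forall>v\<in>carrier_vec (Ng h). vec_norm2 (R h *\<^sub>v v) \<le> M * vec_norm2 v)"
    using alg_bound[OF R(1)] by blast
  show ?thesis
  proof (intro exI[of _ M] allI impI)
    fix h :: real assume h: "0 < h \<and> h \<le> 1"
    have c: "R h \<in> carrier_mat (Ng h) (Ng h)" using alg_carrier[OF R(1)] .
    let ?S = "{vec_norm2 (R h *\<^sub>v v) | v. v \<in> carrier_vec (dim_col (R h)) \<and> vec_norm2 v \<le> 1}"
    have ne: "?S \<noteq> {}"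
    proof -
      have "vec_norm2 (0\<^sub>v (Ng h) :: real vec) \<le> 1" by (simp add: vec_norm2_def)
      then have "vec_norm2 (R h *\<^sub>v 0\<^sub>v (Ng h)) \<in> ?S" using c by auto
      then show ?thesis by blast
    qed
    have "Sup ?S \<le> M"
    proof (rule cSup_least[OF ne])
      fix x assume "x \<in> ?S"
      then obtain v where v: "x = vec_norm2 (R h *\<^sub>v v)" "v \<in> carrier_vec (Ng h)" "vec_norm2 v \<le> 1"
        using c by auto
      have "x \<le> M * vec_norm2 v" using M h v by auto
      also have "\<dots> \<le> M * 1" using M(1) v(3) by (intro mult_left_mono) auto
      finally show "x \<le> M" by simp
    qed
    then show "spec_norm (W h) \<le> M" using R h unfolding spec_norm_def by simp
  qed
qed

end

theorem theorem4p10: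
  fixes a b :: real and V :: "real \<Rightarrow> real" and q :: nat
    and y :: "nat \<Rightarrow> real \<Rightarrow> real"
    and words :: "bool list list"
    and Ngrid :: "real \<Rightarrow> nat"
  assumes "a < b"
    and "smooth_fun V" and "periodic_fun (b - a) V"
    and "\<And>m. m \<le> q \<Longrightarrow> smooth_fun (y m) \<and> periodic_fun (b - a) (y m)"
    and "words \<noteq> []" and "\<And>w. w \<in> set words \<Longrightarrow> w \<noteq> []"
    and "\<exists>c1 c2. 0 < c1 \<and> 0 < c2 \<and>
           (\<forall>h. 0 < h \<and> h \<le> 1 \<longrightarrow> c1 / h \<le> real (Ngrid h) \<and> real (Ngrid h) \<le> c2 / h)"
  shows "\<exists>C. \<forall>h. 0 < h \<and> h \<le> 1 \<longrightarrow>
           spec_norm (iter_comm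
              (map (nested_comm (opA (Ngrid h) h) (opB a b (Ngrid h) h V)) words)
              (observable a b (Ngrid h) h q y)) \<le> C"
proof -
  obtain c1 c2 where c: "0 < c1" "\<forall>h. 0 < h \<and> h \<le> 1 \<longrightarrow> c1 / h \<le> real (Ngrid h) \<and> real (Ngrid h) \<le> c2 / h"
    using assms(7) by blast
  interpret G: gridb Ngrid c1 c2
    using c by unfold_locales auto
  have ob: "G.inA (\<lambda>h. observable a b (Ngrid h) h q y)"
    unfolding observable_def
    by (rule G.obs_list) (use assms(1,4) in \<open>auto intro!: G.grid_Gs\<close>)
  have "G.inA (\<lambda>h. iter_comm (map (nested_comm (opA (Ngrid h) h) (opB a b (Ngrid h) h V)) words)
              (observable a b (Ngrid h) h q y))"
    by (rule G.iter_inA[OF G.opA_invA G.opB_invA[OF assms(1-3)] assms(6) ob])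
  then show ?thesis by (rule G.inA_spec_bound)
qed

end
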